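(* Let $n\ge1$, let $a_0^{(n)},a_1^{(n)},\dots,a_{n-1}^{(n)}$ be positive real numbers, and let $H$ be a nonzero real inner product space with inner product $(\cdot,\cdot)$ and norm $\|\cdot\|$. For $u^0,\dots,u^n\in H$ write $\nabla_\tau u^k=u^k-u^{k-1}$. Then the inequality $$\frac12\sum_{k=1}^n a_{n-k}^{(n)}\big(\|u^k\|^2-\|u^{k-1}\|^2\big)\le\Big(\sum_{k=1}^n a_{n-k}^{(n)}\nabla_\tau u^k,\;u^n\Big)$$ holds for all $u^0,\dots,u^n\in H$ if and only if $a_{n-k}^{(n)}$ is monotonically increasing with respect to $k$, i.e. $a_{n-1}^{(n)}\le a_{n-2}^{(n)}\le\dots\le a_0^{(n)}$.
   Context: In the paper the $a_{n-k}^{(n)}$ are discrete convolution kernels of a discrete Caputo operator $\mathrm{D}_\tau^\alpha u^n=\sum_{k=1}^n a_{n-k}^{(n)}\nabla_\tau u^k$, so the inequality reads $\frac12\mathrm{D}_\tau^\alpha\|u^n\|^2\le(\mathrm{D}_\tau^\alpha u^n,u^n)$. *)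

theory Defs
  imports "HOL-Analysis.Analysis"
begin

end

theory Submission
  imports Defs
begin

lemma abel_aux:
  fixes b e :: "nat \<Rightarrow> real"
  assumes "m \<ge> 1"
  shows "(\<Sum>k=1..m. b k * (e (k-1) - e k)) = b 1 * e 0 - b m * e m + (\<Sum>k=1..<m. (b (k+1) - b k) * e k)"
  using assms
proof (induction m rule: dec_induct)
  case base then show ?case by (simp add: algebra_simps)
next
  case (step m)
  then show ?case by (simp add: algebra_simps)
qed

lemma term_id:
  fixes x y z :: "'a::real_inner"
  shows "c * inner (x - y) z - (1/2) * (c * ((norm x)\<^sup>2 - (norm y)\<^sup>2))
     = (1/2) * (c * ((norm (z - y))\<^sup>2 - (norm (z - x))\<^sup>2))"
  by (simp add: power2_norm_eq_inner inner_diff_left inner_diff_right inner_commute algebra_simps)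

lemma key:
  fixes u :: "nat \<Rightarrow> 'a::real_inner" and b :: "nat \<Rightarrow> real"
  assumes "n \<ge> 1"
  shows "inner (\<Sum>k=1..n. b k *\<^sub>R (u k - u (k - 1))) (u n)
     - (1/2) * (\<Sum>k=1..n. b k * ((norm (u k))\<^sup>2 - (norm (u (k - 1)))\<^sup>2))
     = (1/2) * (b 1 * (norm (u n - u 0))\<^sup>2 + (\<Sum>k=1..<n. (b (k+1) - b k) * (norm (u n - u k))\<^sup>2))"
proof -
  have "inner (\<Sum>k=1..n. b k *\<^sub>R (u k - u (k - 1))) (u n)
     - (1/2) * (\<Sum>k=1..n. b k * ((norm (u k))\<^sup>2 - (norm (u (k - 1)))\<^sup>2))
     = (\<Sum>k=1..n. b k * inner (u k - u (k - 1)) (u n)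
          - (1/2) * (b k * ((norm (u k))\<^sup>2 - (norm (u (k - 1)))\<^sup>2)))"
    by (simp add: inner_sum_left sum_subtractf sum_distrib_left)
  also have "\<dots> = (\<Sum>k=1..n. (1/2) * (b k * ((norm (u n - u (k-1)))\<^sup>2 - (norm (u n - u k))\<^sup>2)))"
    by (rule sum.cong[OF refl]) (rule term_id)
  also have "\<dots> = (1/2) * (\<Sum>k=1..n. b k * ((\<lambda>i. (norm (u n - u i))\<^sup>2) (k-1) - (\<lambda>i. (norm (u n - u i))\<^sup>2) k))"
    by (simp add: sum_distrib_left)
  also have "\<dots> = (1/2) * (b 1 * (norm (u n - u 0))\<^sup>2 + (\<Sum>k=1..<n. (b (k+1) - b k) * (norm (u n - u k))\<^sup>2))"
    by (subst abel_aux[OF assms]) simp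
  finally show ?thesis .
qed

theorem theorem3:
  fixes n :: nat and a :: "nat \<Rightarrow> real"
  assumes "n \<ge> 1"
    and "\<And>j. j < n \<Longrightarrow> a j > 0"
    and "\<exists>x::'a::real_inner. x \<noteq> 0"
  shows "(\<forall>u :: nat \<Rightarrow> 'a.
            (1/2) * (\<Sum>k=1..n. a (n - k) * ((norm (u k))\<^sup>2 - (norm (u (k - 1)))\<^sup>2))
              \<le> inner (\<Sum>k=1..n. a (n - k) *\<^sub>R (u k - u (k - 1))) (u n))
         \<longleftrightarrow> (\<forall>k. 1 \<le> k \<and> k < n \<longrightarrow> a (n - k) \<le> a (n - (k + 1)))"
proof -
  define b where "b k = a (n - k)" for k
  have K: "inner (\<Sum>k=1..n. a (n - k) *\<^sub>R (u k - u (k - 1))) (u n)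
     - (1/2) * (\<Sum>k=1..n. a (n - k) * ((norm (u k))\<^sup>2 - (norm (u (k - 1)))\<^sup>2))
     = (1/2) * (b 1 * (norm (u n - u 0))\<^sup>2 + (\<Sum>k=1..<n. (b (k+1) - b k) * (norm (u n - u k))\<^sup>2))" for u :: "nat \<Rightarrow> 'a"
    using key[OF assms(1), where u=u and b=b] unfolding b_def by simp
  show ?thesis
  proof
    assume H: "\<forall>u :: nat \<Rightarrow> 'a.
            (1/2) * (\<Sum>k=1..n. a (n - k) * ((norm (u k))\<^sup>2 - (norm (u (k - 1)))\<^sup>2))
              \<le> inner (\<Sum>k=1..n. a (n - k) *\<^sub>R (u k - u (k - 1))) (u n)"
    show "\<forall>k. 1 \<le> k \<and> k < n \<longrightarrow> a (n - k) \<le> a (n - (k + 1))"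
    proof (intro allI impI)
      fix j assume j: "1 \<le> j \<and> j < n"
      obtain x :: 'a where x: "x \<noteq> 0" using assms(3) by blast
      define u where "u i = (if i = j then x else 0)" for i
      have "0 \<le> (1/2) * (b 1 * (norm (u n - u 0))\<^sup>2 + (\<Sum>k=1..<n. (b (k+1) - b k) * (norm (u n - u k))\<^sup>2))"
        using H[rule_format, of u] K[of u] by linarith
      moreover have "u n = 0" "u 0 = 0" using j by (auto simp: u_def)
      moreover have "(\<Sum>k=1..<n. (b (k+1) - b k) * (norm (0 - u k))\<^sup>2) = (b (j+1) - b j) * (norm x)\<^sup>2"
      proof -
        have "(\<Sum>k=1..<n. (b (k+1) - b k) * (norm (0 - u k))\<^sup>2)
            = (\<Sum>k\<in>{1..<n}. if k = j then (b (j+1) - b j) * (norm x)\<^sup>2 else 0)"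
          by (rule sum.cong) (auto simp: u_def)
        also have "\<dots> = (b (j+1) - b j) * (norm x)\<^sup>2" using j by simp
        finally show ?thesis .
      qed
      ultimately have "0 \<le> (b (j+1) - b j) * (norm x)\<^sup>2" by simp
      moreover have "(norm x)\<^sup>2 > 0" using x by simp
      ultimately have "b j \<le> b (j+1)"
        by (simp add: zero_le_mult_iff)
      then show "a (n - j) \<le> a (n - (j + 1))" by (simp add: b_def)
    qed
  next
    assume M: "\<forall>k. 1 \<le> k \<and> k < n \<longrightarrow> a (n - k) \<le> a (n - (k + 1))"
    show "\<forall>u :: nat \<Rightarrow> 'a.
            (1/2) * (\<Sum>k=1..n. a (n - k) * ((norm (u k))\<^sup>2 - (norm (u (k - 1)))\<^sup>2))
              \<le> inner (\<Sum>k=1..n. a (n - k) *\<^sub>R (u k - u (k - 1))) (u n)"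
    proof
      fix u :: "nat \<Rightarrow> 'a"
      have b1: "b 1 > 0" using assms(1,2) by (simp add: b_def)
      have "0 \<le> (\<Sum>k=1..<n. (b (k+1) - b k) * (norm (u n - u k))\<^sup>2)"
        by (rule sum_nonneg) (use M in \<open>auto simp: b_def\<close>)
      moreover have "0 \<le> b 1 * (norm (u n - u 0))\<^sup>2" using b1 by simp
      then have "0 \<le> (1/2) * (b 1 * (norm (u n - u 0))\<^sup>2 + (\<Sum>k=1..<n. (b (k+1) - b k) * (norm (u n - u k))\<^sup>2))"
        using calculation by simp
      then show "(1/2) * (\<Sum>k=1..n. a (n - k) * ((norm (u k))\<^sup>2 - (norm (u (k - 1)))\<^sup>2))
              \<le> inner (\<Sum>k=1..n. a (n - k) *\<^sub>R (u k - u (k - 1))) (u n)"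
        using K[of u] by linarith
    qed
  qed
qed

end
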